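(* Let $G$ be a bipartite super edge-magic simple graph with stable sets $X$ and $Y$, suppose $G\cong H_1\oplus H_2$ is a decomposition of $G$, and let $n\ge1$. Then $|\sigma_{S_{2n}(G;H_1,H_2)}|\ge (n+1)|\sigma_G|$.
   Context: For a $(p,q)$-graph $G$ ($p$ vertices, $q$ edges), an edge-magic labeling is a bijection $f:V(G)\cup E(G)\to[1,p+q]$ such that $f(x)+f(xy)+f(y)$ equals a constant (the valence) for every edge $xy$; it is super edge-magic if moreover $f(V(G))=[1,p]$. For a graph $H$, $\sigma_H$ is the set of integers that are valences of super edge-magic labelings of $H$. A decomposition $G\cong H_1\oplus H_2$ means $H_1,H_2$ are subgraphs of $G$ whose edge sets partition $E(G)$. Writing $X=\{x_i\}_{i=1}^s$, $Y=\{y_j\}_{j=1}^t$, $S_{2n}(G;H_1,H_2)$ is the graph with vertex set $X\cup Y\cup\bigcup_{k=1}^n X_k\cup\bigcup_{k=1}^n Y_k$, where $X_k=\{x_i^k\}_{i=1}^s$, $Y_k=\{y_j^k\}_{j=1}^t$ are new vertices, and edge set $E(G)\cup\{x_iy_j^k: x_iy_j\in E(H_1),\,k\in[1,n]\}\cup\{x_i^ky_j: x_iy_j\in E(H_2),\,k\in[1,n]\}$. *)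

theory Defs
  imports Main
begin

definition simple_graph :: "'a set \<Rightarrow> 'a set set \<Rightarrow> bool" where
  "simple_graph V E \<longleftrightarrow> finite V \<and> (\<forall>e\<in>E. \<exists>x y. x \<noteq> y \<and> x \<in> V \<and> y \<in> V \<and> e = {x, y})"

definition bipartite_with :: "'a set \<Rightarrow> 'a set set \<Rightarrow> 'a set \<Rightarrow> 'a set \<Rightarrow> bool" where
  "bipartite_with V E X Y \<longleftrightarrow> X \<union> Y = V \<and> X \<inter> Y = {} \<and>
     (\<forall>e\<in>E. \<exists>x\<in>X. \<exists>y\<in>Y. e = {x, y})"

definition edge_magic_labeling ::
  "'a set \<Rightarrow> 'a set set \<Rightarrow> ('a + 'a set \<Rightarrow> nat) \<Rightarrow> nat \<Rightarrow> bool" where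
  "edge_magic_labeling V E f k \<longleftrightarrow>
     bij_betw f (Inl ` V \<union> Inr ` E) {1 .. card V + card E} \<and>
     (\<forall>e\<in>E. \<forall>x y. e = {x, y} \<longrightarrow> f (Inl x) + f (Inr e) + f (Inl y) = k)"

definition super_edge_magic_labeling ::
  "'a set \<Rightarrow> 'a set set \<Rightarrow> ('a + 'a set \<Rightarrow> nat) \<Rightarrow> nat \<Rightarrow> bool" where
  "super_edge_magic_labeling V E f k \<longleftrightarrow>
     edge_magic_labeling V E f k \<and> f ` (Inl ` V) = {1 .. card V}"

definition super_edge_magic :: "'a set \<Rightarrow> 'a set set \<Rightarrow> bool" where
  "super_edge_magic V E \<longleftrightarrow> (\<exists>f k. super_edge_magic_labeling V E f k)"

definition sigma_sem :: "'a set \<Rightarrow> 'a set set \<Rightarrow> nat set" where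
  "sigma_sem V E = {k. \<exists>f. super_edge_magic_labeling V E f k}"

text \<open>The graph S_{2n}(G;H1,H2). Vertex (v,0) is the original v; (v,k), 1\<le>k\<le>n,
  is the k-th copy (x_i^k or y_j^k).\<close>
definition S2n_V :: "'a set \<Rightarrow> nat \<Rightarrow> ('a \<times> nat) set" where
  "S2n_V V n = V \<times> {0..n}"

definition S2n_E :: "'a set set \<Rightarrow> 'a set \<Rightarrow> 'a set \<Rightarrow> 'a set set \<Rightarrow> 'a set set \<Rightarrow> nat
    \<Rightarrow> ('a \<times> nat) set set" where
  "S2n_E E X Y E1 E2 n =
     ((\<lambda>e. (\<lambda>v. (v, 0)) ` e) ` E) \<union>
     {{(x, 0), (y, k)} | x y k. x \<in> X \<and> y \<in> Y \<and> {x, y} \<in> E1 \<and> k \<in> {1..n}} \<union>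
     {{(x, k), (y, 0)} | x y k. x \<in> X \<and> y \<in> Y \<and> {x, y} \<in> E2 \<and> k \<in> {1..n}}"

end

theory Submission
  imports Defs
begin

lemma divmod_uniq:
  fixes A B r r' m :: nat
  assumes "r < m" "r' < m" "m * A + r = m * B + r'"
  shows "A = B \<and> r = r'"
proof -
  have m: "m > 0" using assms by auto
  have 1: "(m * A + r) div m = A" using m assms(1) by simp
  have 2: "(m * A + r) mod m = r" using m assms(1) by simp
  have 3: "(m * B + r') div m = B" using m assms(2) by simp
  have 4: "(m * B + r') mod m = r'" using m assms(2) by simp
  show ?thesis using 1 2 3 4 assms(3) by metis
qed

lemma arith_key:
  fixes Fx Fy L c n t k :: nat
  assumes "Fx \<ge> 1" "Fy \<ge> 1" "L \<ge> 1" "c \<le> n+1" "Fx + L + Fy = k"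
  shows "(n+1)*(Fx-1) + (n+1)*(Fy-1) + (t+1) + c + ((n+1)*L+1-c) = (n+1)*(k-2)+t+2"
proof -
  obtain a b where ab: "Fx = a+1" "Fy = b+1" using assms by (metis le_add_diff_inverse2)
  have c: "c \<le> (n+1)*L" using assms(3,4) by (metis le_trans mult.right_neutral mult_le_mono2)
  have "k - 2 = a + b + L" using assms(5) ab by simp
  then show ?thesis using ab c by (simp add: algebra_simps)
qed

locale constr =
  fixes V X Y :: "'a set" and E E1 E2 :: "'a set set" and n t k :: nat
    and f :: "'a + 'a set \<Rightarrow> nat"
  assumes sg: "simple_graph V E" and bp: "bipartite_with V E X Y"
    and un: "E1 \<union> E2 = E" and dj: "E1 \<inter> E2 = {}"
    and sem: "super_edge_magic_labeling V E f k" and tn: "t \<le> n"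
begin

definition a :: "nat \<Rightarrow> nat" where "a j = (j + t) mod (n+1) + 1"
definition hv :: "'a \<times> nat \<Rightarrow> nat" where
  "hv v = (n+1) * (f (Inl (fst v)) - 1) + a (snd v)"
definition k' :: nat where "k' = (n+1)*(k-2) + t + 2"
definition h :: "('a \<times> nat) + ('a \<times> nat) set \<Rightarrow> nat" where
  "h z = (case z of Inl v \<Rightarrow> hv v | Inr e \<Rightarrow> k' - sum hv e)"
definition em :: "'a \<Rightarrow> 'a \<Rightarrow> nat \<Rightarrow> ('a \<times> nat) set" where
  "em x y j = (if {x,y} \<in> E1 then {(x,0),(y,j)} else {(x,j),(y,0)})"
definition T :: "('a \<times> 'a \<times> nat) set" where
  "T = {(x,y,j). x\<in>X \<and> y\<in>Y \<and> {x,y}\<in>E \<and> j \<le> n}"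
definition lab :: "'a \<Rightarrow> 'a \<Rightarrow> nat \<Rightarrow> nat" where
  "lab x y j = (n+1) * f (Inr {x,y}) + 1 - a j"

lemma a_range: "1 \<le> a j" "a j \<le> n+1"
  unfolding a_def by auto

lemma a0: "a 0 = t + 1"
  unfolding a_def using tn by simp

lemma a_inj: assumes "i \<le> n" "j \<le> n" "a i = a j" shows "i = j"
proof -
  have "(i + t) mod (n+1) = (j + t) mod (n+1)" using assms(3) unfolding a_def by simp
  moreover have "i + t < 2*(n+1)" "j + t < 2*(n+1)" using assms tn by auto
  ultimately show ?thesis using assms(1,2) by (auto simp: mod_if split: if_splits)
qed

lemma finV: "finite V" using sg unfolding simple_graph_def by auto

lemma finE: "finite E"
proof -
  have "E \<subseteq> Pow V" using sg unfolding simple_graph_def by auto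
  then show ?thesis using finV by (meson finite_Pow_iff finite_subset)
qed

lemma XV: "X \<subseteq> V" and YV: "Y \<subseteq> V" and XYd: "X \<inter> Y = {}"
  using bp unfolding bipartite_with_def by auto

lemma Eform: "e \<in> E \<Longrightarrow> \<exists>x\<in>X. \<exists>y\<in>Y. e = {x,y}"
  using bp unfolding bipartite_with_def by auto

lemma f_bij: "bij_betw f (Inl ` V \<union> Inr ` E) {1 .. card V + card E}"
  using sem unfolding super_edge_magic_labeling_def edge_magic_labeling_def by auto

lemma f_vert: "f ` (Inl ` V) = {1 .. card V}"
  using sem unfolding super_edge_magic_labeling_def by auto

lemma magic: "{x,y} \<in> E \<Longrightarrow> f (Inl x) + f (Inr {x,y}) + f (Inl y) = k"
  using sem unfolding super_edge_magic_labeling_def edge_magic_labeling_def by auto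

lemma fV: "x \<in> V \<Longrightarrow> 1 \<le> f (Inl x) \<and> f (Inl x) \<le> card V"
  using f_vert by (metis atLeastAtMost_iff image_eqI)

lemma f_inj: "inj_on f (Inl ` V \<union> Inr ` E)"
  using f_bij bij_betw_def by blast

lemma fE: assumes "e \<in> E" shows "card V + 1 \<le> f (Inr e) \<and> f (Inr e) \<le> card V + card E"
proof -
  have r: "f (Inr e) \<in> {1 .. card V + card E}" using f_bij assms
    by (meson UnCI bij_betwE image_eqI)
  have "\<not> f (Inr e) \<le> card V"
  proof
    assume "f (Inr e) \<le> card V"
    then have "f (Inr e) \<in> f ` (Inl ` V)" using r f_vert by auto
    then obtain v where v: "v \<in> V" "f (Inr e) = f (Inl v)" by auto
    have "Inr e = (Inl v :: 'a + 'a set)" using f_inj v assms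
      by (meson UnCI image_eqI inj_on_contraD)
    then show False by simp
  qed
  then show ?thesis using r by auto
qed

lemma em0: "em x y 0 = {(x,0),(y,0)}" unfolding em_def by auto

lemma E'_eq: "S2n_E E X Y E1 E2 n = (\<lambda>(x,y,j). em x y j) ` T"
proof
  show "S2n_E E X Y E1 E2 n \<subseteq> (\<lambda>(x,y,j). em x y j) ` T"
  proof
    fix e' assume "e' \<in> S2n_E E X Y E1 E2 n"
    then consider (a) e where "e \<in> E" "e' = (\<lambda>v. (v, 0)) ` e"
      | (b) x y j where "x \<in> X" "y \<in> Y" "{x,y} \<in> E1" "j \<in> {1..n}" "e' = {(x,0),(y,j)}"
      | (c) x y j where "x \<in> X" "y \<in> Y" "{x,y} \<in> E2" "j \<in> {1..n}" "e' = {(x,j),(y,0)}"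
      unfolding S2n_E_def by blast
    then show "e' \<in> (\<lambda>(x,y,j). em x y j) ` T"
    proof cases
      case a
      then obtain x y where xy: "x \<in> X" "y \<in> Y" "e = {x,y}" using Eform by blast
      then have "e' = em x y 0" using a em0 by auto
      moreover have "(x,y,0) \<in> T" using xy a unfolding T_def by auto
      ultimately show ?thesis by force
    next
      case b
      then have "e' = em x y j" unfolding em_def by auto
      moreover have "(x,y,j) \<in> T" using b un unfolding T_def by auto
      ultimately show ?thesis by force
    next
      case c
      then have "{x,y} \<notin> E1" using dj by auto
      then have "e' = em x y j" using c unfolding em_def by auto
      moreover have "(x,y,j) \<in> T" using c un unfolding T_def by auto
      ultimately show ?thesis by force
    qed
  qed
next
  show "(\<lambda>(x,y,j). em x y j) ` T \<subseteq> S2n_E E X Y E1 E2 n"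
  proof
    fix e' assume "e' \<in> (\<lambda>(x,y,j). em x y j) ` T"
    then obtain x y j where T: "x \<in> X" "y \<in> Y" "{x,y} \<in> E" "j \<le> n" and e': "e' = em x y j"
      unfolding T_def by auto
    show "e' \<in> S2n_E E X Y E1 E2 n"
    proof (cases "j = 0")
      case True
      then have "e' = (\<lambda>v. (v, 0)) ` {x,y}" using e' em0 by auto
      then show ?thesis using T unfolding S2n_E_def by blast
    next
      case False
      show ?thesis
      proof (cases "{x,y} \<in> E1")
        case True
        then have "e' = {(x,0),(y,j)}" using e' unfolding em_def by auto
        then show ?thesis using T True False unfolding S2n_E_def by auto
      next
        case F: False
        then have "e' = {(x,j),(y,0)}" "{x,y} \<in> E2" using e' un T unfolding em_def by auto
        then show ?thesis using T False unfolding S2n_E_def by auto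
      qed
    qed
  qed
qed

lemma T_props: assumes "(x,y,j) \<in> T" shows "x \<in> V" "y \<in> V" "x \<noteq> y" "x \<in> X" "y \<in> Y" "{x,y} \<in> E" "j \<le> n"
  using assms XV YV XYd unfolding T_def by auto

lemma sum_em: assumes "(x,y,j) \<in> T"
  shows "sum hv (em x y j) = (n+1)*(f (Inl x)-1) + (n+1)*(f (Inl y)-1) + (t+1) + a j"
proof -
  have xy: "x \<noteq> y" using T_props[OF assms] by auto
  show ?thesis
  proof (cases "{x,y} \<in> E1")
    case True
    then have "em x y j = {(x,0),(y,j)}" unfolding em_def by auto
    then show ?thesis using xy a0 unfolding hv_def by simp
  next
    case False
    then have "em x y j = {(x,j),(y,0)}" unfolding em_def by auto
    then show ?thesis using xy a0 unfolding hv_def by simp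
  qed
qed

lemma em_total: assumes "(x,y,j) \<in> T" shows "sum hv (em x y j) + lab x y j = k'"
proof -
  note P = T_props[OF assms]
  have "f (Inr {x,y}) \<ge> 1" using fE[OF P(6)] by auto
  from arith_key[OF conjunct1[OF fV[OF P(1)]] conjunct1[OF fV[OF P(2)]] this a_range(2)[of j] magic[OF P(6)], of t]
  show ?thesis unfolding sum_em[OF assms] lab_def k'_def by simp
qed

lemma h_em: assumes "(x,y,j) \<in> T" shows "h (Inr (em x y j)) = lab x y j"
  using em_total[OF assms] unfolding h_def by simp

lemma lab_range: assumes "(x,y,j) \<in> T"
  shows "(n+1)*card V + 1 \<le> lab x y j" "lab x y j \<le> (n+1)*(card V + card E)"
proof -
  note P = T_props[OF assms]
  have L: "card V + 1 \<le> f (Inr {x,y})" "f (Inr {x,y}) \<le> card V + card E" using fE[OF P(6)] by auto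
  have c: "1 \<le> a j" "a j \<le> n+1" using a_range by auto
  have X: "(n+1)*card V + (n+1) \<le> (n+1) * f (Inr {x,y})" using L
    by (metis add_mult_distrib2 mult.right_neutral mult_le_mono2)
  show "(n+1)*card V + 1 \<le> lab x y j" using X c unfolding lab_def by linarith
  have "(n+1) * f (Inr {x,y}) \<le> (n+1)*(card V + card E)" using L mult_le_mono2 by blast
  then show "lab x y j \<le> (n+1)*(card V + card E)" using c unfolding lab_def by simp
qed

lemma lab_form: assumes "L \<ge> 1" "1 \<le> c" "c \<le> n+1"
  shows "(n+1)*L + 1 - c = (n+1)*(L-1) + (n+1-c) + 1"
proof -
  obtain L0 where "L = L0 + 1" using assms by (metis le_add_diff_inverse2)
  then show ?thesis using assms by (simp add: algebra_simps)
qed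

lemma lab_inj: assumes "(x,y,j) \<in> T" "(x',y',j') \<in> T" "lab x y j = lab x' y' j'"
  shows "x = x' \<and> y = y' \<and> j = j'"
proof -
  note P = T_props[OF assms(1)] and P' = T_props[OF assms(2)]
  have L: "f (Inr {x,y}) \<ge> 1" "f (Inr {x',y'}) \<ge> 1" using fE P(6) P'(6) by fastforce+
  have "(n+1)*(f (Inr {x,y})-1) + (n+1-a j) + 1 = (n+1)*(f (Inr {x',y'})-1) + (n+1-a j') + 1"
    using assms(3) lab_form[OF L(1) a_range] lab_form[OF L(2) a_range] unfolding lab_def by metis
  then have eqn: "(n+1)*(f (Inr {x,y})-1) + (n+1-a j) = (n+1)*(f (Inr {x',y'})-1) + (n+1-a j')" by simp
  have r: "n+1-a j < n+1" "n+1-a j' < n+1" using a_range[of j] a_range[of j'] by auto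
  from divmod_uniq[OF r eqn] have "f (Inr {x,y})-1 = f (Inr {x',y'})-1" "n+1-a j = n+1-a j'"
    by auto
  then have eq: "f (Inr {x,y}) = f (Inr {x',y'})" "a j = a j'" using L a_range[of j] a_range[of j'] by auto
  have "Inr {x,y} = (Inr {x',y'} :: 'a + 'a set)" using f_inj eq(1) P(6) P'(6)
    by (meson UnCI image_eqI inj_on_contraD)
  then have s: "{x,y} = {x',y'}" by simp
  have "x = x' \<and> y = y'" using s P(4,5) P'(4,5) XYd by (metis disjoint_iff doubleton_eq_iff)
  moreover have "j = j'" using a_inj P(7) P'(7) eq(2) by auto
  ultimately show ?thesis by auto
qed

lemma hv_range: assumes "v \<in> S2n_V V n" shows "1 \<le> hv v" "hv v \<le> (n+1)*card V"
proof -
  obtain x i where v: "v = (x,i)" "x \<in> V" "i \<le> n" using assms unfolding S2n_V_def by auto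
  show "1 \<le> hv v" using a_range unfolding hv_def by (simp add: add_increasing)
  have F: "1 \<le> f (Inl x)" "f (Inl x) \<le> card V" using fV[OF v(2)] by auto
  have "hv v \<le> (n+1)*(f (Inl x) - 1) + (n+1)" using a_range v unfolding hv_def by simp
  also have "\<dots> = (n+1) * f (Inl x)" using F
    by (metis add.commute mult.right_neutral mult_Suc_right le_add_diff_inverse2 Suc_eq_plus1)
  also have "\<dots> \<le> (n+1)*card V" using F mult_le_mono2 by blast
  finally show "hv v \<le> (n+1)*card V" .
qed

lemma hv_inj: "inj_on hv (S2n_V V n)"
proof (rule inj_onI)
  fix v w assume v: "v \<in> S2n_V V n" and w: "w \<in> S2n_V V n" and eq: "hv v = hv w"
  obtain x i where vv: "v = (x,i)" "x \<in> V" "i \<le> n" using v unfolding S2n_V_def by auto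
  obtain x' i' where ww: "w = (x',i')" "x' \<in> V" "i' \<le> n" using w unfolding S2n_V_def by auto
  have "(n+1)*(f (Inl x) - 1) + (a i - 1) = (n+1)*(f (Inl x') - 1) + (a i' - 1)"
    using eq vv ww a_range[of i] a_range[of i'] unfolding hv_def by simp
  from divmod_uniq[OF _ _ this] have "f (Inl x) - 1 = f (Inl x') - 1" "a i - 1 = a i' - 1"
    using a_range[of i] a_range[of i'] by auto
  moreover have "1 \<le> f (Inl x)" "1 \<le> f (Inl x')" using fV vv ww by auto
  ultimately have e: "f (Inl x) = f (Inl x')" "a i = a i'" using a_range[of i] a_range[of i'] by linarith+
  have "Inl x = (Inl x' :: 'a + 'a set)" using f_inj e(1) vv ww
    by (meson UnCI image_eqI inj_on_contraD)
  then show "v = w" using vv ww e(2) a_inj by auto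
qed

lemma card_V': "card (S2n_V V n) = card V * (n+1)"
  unfolding S2n_V_def by (simp add: card_cartesian_product)

lemma finV': "finite (S2n_V V n)" unfolding S2n_V_def using finV by simp

lemma hv_img: "hv ` (S2n_V V n) = {1 .. card (S2n_V V n)}"
proof (rule card_subset_eq)
  show "hv ` S2n_V V n \<subseteq> {1..card (S2n_V V n)}" using hv_range card_V'
    by (auto simp: algebra_simps)
  show "card (hv ` S2n_V V n) = card {1..card (S2n_V V n)}" using card_image[OF hv_inj] by simp
qed simp

lemma em_inj: "inj_on (\<lambda>(x,y,j). em x y j) T"
proof (rule inj_onI)
  fix p p' assume p: "p \<in> T" and p': "p' \<in> T" and eq: "(\<lambda>(x,y,j). em x y j) p = (\<lambda>(x,y,j). em x y j) p'"
  obtain x y j where pp: "p = (x,y,j)" by (cases p) auto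
  obtain x' y' j' where pp': "p' = (x',y',j')" by (cases p') auto
  have "lab x y j = lab x' y' j'" using h_em p p' eq pp pp' by (metis case_prod_conv)
  then show "p = p'" using lab_inj p p' pp pp' by auto
qed

lemma card_T: "card T = card E * (n+1)"
proof -
  have "bij_betw (\<lambda>(x,y,j). ({x,y},j)) T (E \<times> {0..n})"
  proof (rule bij_betw_imageI)
    show "inj_on (\<lambda>(x,y,j). ({x,y},j)) T"
    proof (rule inj_onI)
      fix p p' assume p: "p \<in> T" and p': "p' \<in> T" and eq: "(\<lambda>(x,y,j). ({x,y},j)) p = (\<lambda>(x,y,j). ({x,y},j)) p'"
      obtain x y j where pp: "p = (x,y,j)" by (cases p) auto
      obtain x' y' j' where pp': "p' = (x',y',j')" by (cases p') auto
      have s: "{x,y} = {x',y'}" "j = j'" using eq pp pp' by auto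
      have "x = x' \<and> y = y'" using s T_props[OF p[unfolded pp]] T_props[OF p'[unfolded pp']] XYd
        by (metis disjoint_iff doubleton_eq_iff)
      then show "p = p'" using pp pp' s by auto
    qed
    show "(\<lambda>(x,y,j). ({x,y},j)) ` T = E \<times> {0..n}"
    proof
      show "(\<lambda>(x,y,j). ({x,y},j)) ` T \<subseteq> E \<times> {0..n}" unfolding T_def by auto
      show "E \<times> {0..n} \<subseteq> (\<lambda>(x,y,j). ({x,y},j)) ` T"
      proof
        fix z assume z: "z \<in> E \<times> {0..n}"
        then obtain e j where ej: "z = (e,j)" "e \<in> E" "j \<le> n" by auto
        then obtain x y where "x \<in> X" "y \<in> Y" "e = {x,y}" using Eform by blast
        then have "(x,y,j) \<in> T" "z = (\<lambda>(x,y,j). ({x,y},j)) (x,y,j)" using ej unfolding T_def by auto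
        then show "z \<in> (\<lambda>(x,y,j). ({x,y},j)) ` T" by blast
      qed
    qed
  qed
  then show ?thesis by (simp add: bij_betw_same_card card_cartesian_product)
qed

lemma card_E': "card (S2n_E E X Y E1 E2 n) = card E * (n+1)"
  unfolding E'_eq using card_image[OF em_inj] card_T by simp

lemma E'_elim: assumes "e' \<in> S2n_E E X Y E1 E2 n"
  obtains x y j where "(x,y,j) \<in> T" "e' = em x y j"
  using assms unfolding E'_eq by auto

lemma em_card2: assumes "(x,y,j) \<in> T" "em x y j = {u,w}" shows "u \<noteq> w"
proof
  assume "u = w"
  then have "em x y j = {u}" using assms by simp
  moreover have "x \<noteq> y" using T_props[OF assms(1)] by auto
  ultimately show False unfolding em_def by (auto split: if_splits simp: doubleton_eq_iff)
qed

lemma result: "super_edge_magic_labeling (S2n_V V n) (S2n_E E X Y E1 E2 n) h k'"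
proof -
  define V' where "V' = S2n_V V n"
  define E' where "E' = S2n_E E X Y E1 E2 n"
  define D where "D = Inl ` V' \<union> Inr ` E'"
  have finE': "finite E'" unfolding E'_def E'_eq using finE
  proof -
    have "T \<subseteq> X \<times> Y \<times> {0..n}" unfolding T_def by auto
    moreover have "finite X" "finite Y" using XV YV finV finite_subset by auto
    ultimately have "finite T" by (meson finite_SigmaI finite_atLeastAtMost finite_subset)
    then show "finite ((\<lambda>(x,y,j). em x y j) ` T)" by simp
  qed
  have cD: "card D = card V' + card E'" unfolding D_def
    by (subst card_Un_disjoint) (auto simp: finV' V'_def finE' card_image)
  have hvert: "h ` Inl ` V' = {1..card V'}" unfolding V'_def using hv_img by (simp add: image_image h_def)
  have inj: "inj_on h D"
  proof (rule inj_onI)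
    fix z1 z2 assume z1: "z1 \<in> D" and z2: "z2 \<in> D" and eq: "h z1 = h z2"
    have less: "h (Inl v) < h (Inr e')" if vV: "v \<in> V'" and eE: "e' \<in> E'" for v e'
    proof -
      obtain x y j where xyj: "(x,y,j) \<in> T" "e' = em x y j" using eE E'_elim unfolding E'_def by blast
      have "hv v \<le> (n+1)*card V" using hv_range vV unfolding V'_def by auto
      moreover have "(n+1)*card V + 1 \<le> lab x y j" using lab_range[OF xyj(1)] by auto
      ultimately show ?thesis using h_em[OF xyj(1)] xyj(2) unfolding h_def by simp
    qed
    show "z1 = z2"
    proof (cases z1)
      case (Inl v)
      show ?thesis
      proof (cases z2)
        case (Inl w)
        then show ?thesis using `z1 = Inl v` z1 z2 eq hv_inj unfolding D_def V'_def h_def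
          by (auto dest: inj_onD)
      next
        case (Inr e)
        then show ?thesis using `z1 = Inl v` z1 z2 eq less unfolding D_def by fastforce
      qed
    next
      case (Inr e)
      show ?thesis
      proof (cases z2)
        case (Inl w)
        then show ?thesis using `z1 = Inr e` z1 z2 eq less unfolding D_def by fastforce
      next
        case (Inr e2)
        have "e \<in> E'" "e2 \<in> E'" using z1 z2 `z1 = Inr e` Inr unfolding D_def by auto
        then obtain x y j x' y' j' where t: "(x,y,j) \<in> T" "e = em x y j" "(x',y',j') \<in> T" "e2 = em x' y' j'"
          using E'_elim unfolding E'_def by metis
        have "lab x y j = lab x' y' j'" using eq `z1 = Inr e` Inr t h_em by metis
        then show ?thesis using lab_inj[OF t(1) t(3)] t `z1 = Inr e` Inr by auto
      qed
    qed
  qed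
  have sub: "h ` D \<subseteq> {1 .. card V' + card E'}"
  proof
    fix m assume "m \<in> h ` D"
    then consider v where "v \<in> V'" "m = h (Inl v)" | e' where "e' \<in> E'" "m = h (Inr e')"
      unfolding D_def by auto
    then show "m \<in> {1 .. card V' + card E'}"
    proof cases
      case 1
      then have "m \<in> h ` Inl ` V'" by auto
      then show ?thesis using hvert by auto
    next
      case 2
      then obtain x y j where xyj: "(x,y,j) \<in> T" "e' = em x y j" using E'_elim unfolding E'_def by blast
      have "lab x y j \<le> (n+1)*(card V + card E)" "(n+1)*card V + 1 \<le> lab x y j" using lab_range[OF xyj(1)] by auto
      moreover have "card V' + card E' = (n+1)*(card V + card E)"
        unfolding V'_def E'_def card_V' card_E' by (simp add: algebra_simps)
      ultimately show ?thesis using 2 h_em[OF xyj(1)] xyj(2) by auto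
    qed
  qed
  have img: "h ` D = {1 .. card V' + card E'}"
    by (rule card_subset_eq) (use sub cD card_image[OF inj] in auto)
  have bij: "bij_betw h D {1 .. card V' + card E'}" using inj img by (simp add: bij_betw_def)
  have mag: "\<forall>e\<in>E'. \<forall>u w. e = {u, w} \<longrightarrow> h (Inl u) + h (Inr e) + h (Inl w) = k'"
  proof (intro ballI allI impI)
    fix e' u w assume e': "e' \<in> E'" and uw: "e' = {u,w}"
    obtain x y j where xyj: "(x,y,j) \<in> T" "e' = em x y j" using e' E'_elim unfolding E'_def by blast
    have "u \<noteq> w" using em_card2 xyj uw by auto
    then have "sum hv e' = hv u + hv w" using uw by simp
    then show "h (Inl u) + h (Inr e') + h (Inl w) = k'"
      using em_total[OF xyj(1)] h_em[OF xyj(1)] xyj(2) unfolding h_def by simp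
  qed
  show ?thesis unfolding super_edge_magic_labeling_def edge_magic_labeling_def
    using bij mag hvert unfolding D_def V'_def E'_def by auto
qed

end


lemma sigma_bound:
  assumes "{u,w} \<in> E" "u \<in> V" "w \<in> V"
  shows "sigma_sem V E \<subseteq> {3 .. 3*(card V + card E)}"
proof
  fix k assume "k \<in> sigma_sem V E"
  then obtain f where f: "super_edge_magic_labeling V E f k" unfolding sigma_sem_def by auto
  then have b: "bij_betw f (Inl ` V \<union> Inr ` E) {1 .. card V + card E}"
    and m: "f (Inl u) + f (Inr {u,w}) + f (Inl w) = k"
    using assms unfolding super_edge_magic_labeling_def edge_magic_labeling_def by auto
  have "f (Inl u) \<in> {1 .. card V + card E}" "f (Inl w) \<in> {1 .. card V + card E}"
       "f (Inr {u,w}) \<in> {1 .. card V + card E}"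
    using assms b by (meson UnCI bij_betwE image_eqI)+
  then show "k \<in> {3 .. 3*(card V + card E)}" using m by auto
qed

lemma sigma_empty:
  assumes "E = {}" "super_edge_magic V E"
  shows "sigma_sem V E = UNIV"
proof -
  obtain f k where "super_edge_magic_labeling V E f k" using assms(2) unfolding super_edge_magic_def by auto
  then have "super_edge_magic_labeling V E f k'" for k' using assms(1)
    unfolding super_edge_magic_labeling_def edge_magic_labeling_def by simp
  then show ?thesis unfolding sigma_sem_def by auto
qed

theorem mainTheorem10:
  fixes V X Y :: "'a set" and E E1 E2 :: "'a set set" and n :: nat
  assumes "simple_graph V E"
    and "bipartite_with V E X Y"
    and "super_edge_magic V E"
    and "E1 \<union> E2 = E" and "E1 \<inter> E2 = {}"
    and "n \<ge> 1"
  shows "card (sigma_sem (S2n_V V n) (S2n_E E X Y E1 E2 n)) \<ge> (n + 1) * card (sigma_sem V E)"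
proof (cases "E = {}")
  case True
  then have "sigma_sem V E = UNIV" using sigma_empty assms(3) by auto
  then show ?thesis by simp
next
  case False
  then obtain e where "e \<in> E" by auto
  then have "\<exists>x y. x \<noteq> y \<and> x \<in> V \<and> y \<in> V \<and> e = {x,y}"
    using assms(1) unfolding simple_graph_def by blast
  then obtain x y where xy0: "x \<noteq> y" "x \<in> V" "y \<in> V" "e = {x,y}" by blast
  then have xy: "x \<noteq> y" "x \<in> V" "y \<in> V" "e = {x,y}" "{x,y} \<in> E" using `e \<in> E` by auto
  have sG: "sigma_sem V E \<subseteq> {3 .. 3*(card V + card E)}" using sigma_bound[OF xy(5) xy(2) xy(3)] .
  have e': "{(x,0::nat),(y,0)} \<in> S2n_E E X Y E1 E2 n"
  proof -
    have "(\<lambda>v. (v, 0::nat)) ` {x,y} = {(x,0),(y,0)}" by auto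
    then show ?thesis unfolding S2n_E_def using xy(5) by blast
  qed
  have "(x,0::nat) \<in> S2n_V V n" "(y,0::nat) \<in> S2n_V V n" using xy unfolding S2n_V_def by auto
  then have "finite (sigma_sem (S2n_V V n) (S2n_E E X Y E1 E2 n))"
    using sigma_bound[OF e'] finite_subset[OF _ finite_atLeastAtMost] by metis
  moreover
  define \<Phi> where "\<Phi> = (\<lambda>(k::nat,t::nat). (n+1)*(k-2) + t + 2)"
  have sub: "\<Phi> ` (sigma_sem V E \<times> {0..n}) \<subseteq> sigma_sem (S2n_V V n) (S2n_E E X Y E1 E2 n)"
  proof
    fix m assume "m \<in> \<Phi> ` (sigma_sem V E \<times> {0..n})"
    then obtain k t where kt: "k \<in> sigma_sem V E" "t \<le> n" "m = \<Phi> (k,t)" by auto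
    then obtain f where f: "super_edge_magic_labeling V E f k" unfolding sigma_sem_def by auto
    interpret C: constr V X Y E E1 E2 n t k f
      using assms f kt by unfold_locales simp_all
    show "m \<in> sigma_sem (S2n_V V n) (S2n_E E X Y E1 E2 n)"
      using C.result kt unfolding sigma_sem_def \<Phi>_def C.k'_def by auto
  qed
  moreover have inj: "inj_on \<Phi> (sigma_sem V E \<times> {0..n})"
  proof (rule inj_onI)
    fix p q assume p: "p \<in> sigma_sem V E \<times> {0..n}" and q: "q \<in> sigma_sem V E \<times> {0..n}"
      and eq: "\<Phi> p = \<Phi> q"
    obtain k t where pq1: "p = (k,t)" by fastforce
    obtain k2 t2 where pq2: "q = (k2,t2)" by fastforce
    note pq = pq1 pq2
    have "(n+1)*(k-2) + t = (n+1)*(k2-2) + t2" using eq pq unfolding \<Phi>_def by simp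
    moreover have "t < n+1" "t2 < n+1" using p q pq by auto
    ultimately have "k-2 = k2-2 \<and> t = t2" using divmod_uniq by blast
    then have "k-2 = k2-2" "t = t2" by auto
    moreover have "k \<ge> 3" "k2 \<ge> 3" using p q pq sG by auto
    ultimately show "p = q" using pq by auto
  qed
  ultimately have "card (\<Phi> ` (sigma_sem V E \<times> {0..n})) \<le> card (sigma_sem (S2n_V V n) (S2n_E E X Y E1 E2 n))"
    using card_mono by blast
  moreover have "card (\<Phi> ` (sigma_sem V E \<times> {0..n})) = card (sigma_sem V E) * (n+1)"
    using card_image[OF inj] by (simp add: card_cartesian_product)
  ultimately show ?thesis by (simp add: mult.commute)
qed

end
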